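(* Let $s\ge 1$, $q=4^{2s}$, and let $\theta$ be the automorphism of $F_q$ given by $\theta(a)=a^{4^s}$. Let $n$ be odd and let $C$ be a skew cyclic code of length $n$ over $F_q$ generated by a (right) divisor of $x^n-1$ in $F_q[x;\theta]$. If $C$ is a reversible DNA code, then its dual code $C^\perp$ is also a reversible DNA code.
   Context: $F_q[x;\theta]$ is the skew polynomial ring with multiplication determined by $xa=\theta(a)x$. A skew cyclic code of length $n$ is a linear code $C\subseteq F_q^n$ such that $(\theta(c_{n-1}),\theta(c_0),\ldots,\theta(c_{n-2}))\in C$ whenever $(c_0,\ldots,c_{n-1})\in C$; such codes correspond to left $F_q[x;\theta]$-submodules of $F_q[x;\theta]/(x^n-1)$ via $(c_0,\ldots,c_{n-1})\mapsto\sum c_ix^i$. $C^\perp$ is the dual with respect to the standard inner product on $F_q^n$. DNA correspondence: there is a fixed bijection $\tau:F_{4^{2s}}\to\{A,T,G,C\}^{2s}$ such that for every $\beta$, $\tau(\beta^{4^s})$ is the reverse of the string $\tau(\beta)$; it extends to $\phi:F_q^n\to\{A,T,G,C\}^{2sn}$ by concatenation. A code $C\subseteq F_q^n$ is a reversible DNA code if the reverse string $\phi(c)^r$ lies in $\phi(C)$ for all $c\in C$; equivalently, $(\theta(c_{n-1}),\ldots,\theta(c_1),\theta(c_0))\in C$ for every $(c_0,\ldots,c_{n-1})\in C$. *)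

theory Defs
  imports "HOL-Computational_Algebra.Polynomial" "HOL-Library.Cardinality"
begin

text \<open>Multiplication in the skew polynomial ring F[x;theta], with x a = theta(a) x,
  on the carrier of ordinary polynomials (coefficient sequences):
  (sum a_i x^i)(sum b_j x^j) = sum a_i theta^i(b_j) x^(i+j).\<close>
definition skew_mult :: "('a::comm_ring_1 \<Rightarrow> 'a) \<Rightarrow> 'a poly \<Rightarrow> 'a poly \<Rightarrow> 'a poly" where
  "skew_mult \<theta> f g =
     (\<Sum>i\<le>degree f. \<Sum>j\<le>degree g. monom (coeff f i * (\<theta> ^^ i) (coeff g j)) (i + j))"

text \<open>Words of length n are lists of length n; (c_0,...,c_{n-1}) corresponds to sum c_i x^i.\<close>

definition linear_code :: "nat \<Rightarrow> 'a::field list set \<Rightarrow> bool" where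
  "linear_code n C \<longleftrightarrow> (\<forall>c\<in>C. length c = n) \<and> replicate n 0 \<in> C \<and>
     (\<forall>c\<in>C. \<forall>d\<in>C. map2 (+) c d \<in> C) \<and> (\<forall>a. \<forall>c\<in>C. map (\<lambda>x. a * x) c \<in> C)"

definition skew_cyclic_code :: "('a::field \<Rightarrow> 'a) \<Rightarrow> nat \<Rightarrow> 'a list set \<Rightarrow> bool" where
  "skew_cyclic_code \<theta> n C \<longleftrightarrow> linear_code n C \<and>
     (\<forall>c\<in>C. map \<theta> (last c # butlast c) \<in> C)"

text \<open>The code corresponding to the left submodule of F[x;theta]/(x^n - 1) generated by g
  (a right divisor of x^n - 1): residues of degree < n of the left multiples f g.\<close>
definition skew_code_gen :: "('a::field \<Rightarrow> 'a) \<Rightarrow> nat \<Rightarrow> 'a poly \<Rightarrow> 'a list set" where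
  "skew_code_gen \<theta> n g = {c. length c = n \<and> (\<exists>f. Poly c = skew_mult \<theta> f g)}"

definition right_divides_xn1 :: "('a::field \<Rightarrow> 'a) \<Rightarrow> nat \<Rightarrow> 'a poly \<Rightarrow> bool" where
  "right_divides_xn1 \<theta> n g \<longleftrightarrow> (\<exists>h. skew_mult \<theta> h g = monom 1 n - 1)"

definition dual_code :: "nat \<Rightarrow> 'a::field list set \<Rightarrow> 'a list set" where
  "dual_code n C = {v. length v = n \<and> (\<forall>c\<in>C. (\<Sum>i<n. c ! i * v ! i) = 0)}"

text \<open>Reversible DNA code, via the stated equivalent condition
  (theta(c_{n-1}),...,theta(c_0)) in C.\<close>
definition reversible_DNA :: "('a::field \<Rightarrow> 'a) \<Rightarrow> 'a list set \<Rightarrow> bool" where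
  "reversible_DNA \<theta> C \<longleftrightarrow> (\<forall>c\<in>C. rev (map \<theta> c) \<in> C)"

end

theory Submission
  imports Defs
begin

lemma char2:
  assumes "CARD('a::{finite,field}) = 4 ^ (2 * s)"
  shows "(2::'a) = 0"
proof -
  have inj: "inj (\<lambda>x::'a. x + 1)" by (simp add: inj_def)
  have surj: "range (\<lambda>x::'a. x + 1) = UNIV"
    by (metis UNIV_eq_I diff_add_cancel rangeI)
  have "(\<Sum>x\<in>UNIV. (x::'a) + 1) = (\<Sum>x\<in>UNIV. x)"
    using sum.reindex[OF inj, of "\<lambda>x. x"] surj by simp
  hence "of_nat CARD('a) = (0::'a)"
    by (simp add: sum.distrib)
  hence "(2::'a) ^ (4 * s) = 0"
    using assms by (simp add: power_mult)
  thus ?thesis by simp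
qed

lemma frob_add:
  assumes "(2::'a::field) = 0"
  shows "((a::'a) + b) ^ (2 ^ k) = a ^ (2 ^ k) + b ^ (2 ^ k)"
proof (induction k)
  case 0 then show ?case by simp
next
  case (Suc k)
  have sq: "(x + y) ^ 2 = x ^ 2 + (y::'a) ^ 2" for x y
  proof -
    have "(x + y) ^ 2 = x ^ 2 + y ^ 2 + 2 * x * y" by (simp add: power2_eq_square algebra_simps)
    thus ?thesis using assms by simp
  qed
  have "(a + b) ^ (2 ^ Suc k) = ((a + b) ^ (2 ^ k)) ^ 2"
    by (simp add: power_mult[symmetric] mult.commute)
  also have "\<dots> = (a ^ (2 ^ k)) ^ 2 + (b ^ (2 ^ k)) ^ 2" using Suc sq by simp
  also have "\<dots> = a ^ (2 ^ Suc k) + b ^ (2 ^ Suc k)"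
    by (simp add: power_mult[symmetric] mult.commute)
  finally show ?case .
qed

theorem theorem7:
  fixes s n :: nat and g :: "'a::{finite,field} poly" and C :: "'a list set"
  assumes "s \<ge> 1"
    and "CARD('a) = 4 ^ (2 * s)"
    and "odd n"
    and "right_divides_xn1 (\<lambda>a. a ^ (4 ^ s)) n g"
    and "C = skew_code_gen (\<lambda>a. a ^ (4 ^ s)) n g"
    and "skew_cyclic_code (\<lambda>a. a ^ (4 ^ s)) n C"
    and "reversible_DNA (\<lambda>a. a ^ (4 ^ s)) C"
  shows "reversible_DNA (\<lambda>a. a ^ (4 ^ s)) (dual_code n C)"
proof -
  define \<theta> where "\<theta> = (\<lambda>a::'a. a ^ (4 ^ s))"
  have two: "(2::'a) = 0" using char2 assms(2) by blast
  have e: "(4::nat) ^ s = 2 ^ (2 * s)" by (simp add: power_mult)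
  have add: "\<theta> (a + b) = \<theta> a + \<theta> b" for a b
    unfolding \<theta>_def e using frob_add[OF two] by blast
  have mul: "\<theta> (a * b) = \<theta> a * \<theta> b" for a b
    unfolding \<theta>_def by (simp add: power_mult_distrib)
  have zero: "\<theta> 0 = 0" unfolding \<theta>_def by simp
  have sumt: "\<theta> (sum f A) = sum (\<lambda>x. \<theta> (f x)) A" for f :: "nat \<Rightarrow> 'a" and A
    by (induction A rule: infinite_finite_induct) (auto simp: zero add)
  have injt: "inj \<theta>"
  proof (rule injI)
    fix a b assume h: "\<theta> a = \<theta> b"
    have "\<theta> (a - b) + \<theta> b = \<theta> a" using add[of "a - b" b] by simp
    hence "\<theta> (a - b) = 0" using h by simp
    hence "a - b = 0" unfolding \<theta>_def by simp
    thus "a = b" by simp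
  qed
  define F where "F = (\<lambda>c. rev (map \<theta> c))"
  have lin: "linear_code n C" using assms(6) unfolding skew_cyclic_code_def by blast
  have len: "\<forall>c\<in>C. length c = n" using lin unfolding linear_code_def by blast
  have FC: "F ` C \<subseteq> C" using assms(7) unfolding reversible_DNA_def F_def \<theta>_def by auto
  have injF: "inj F" unfolding F_def
    by (metis (no_types, lifting) injD injI injt inj_map_eq_map rev_rev_ident)
  have finC: "finite C"
  proof -
    have "C \<subseteq> {xs. set xs \<subseteq> UNIV \<and> length xs = n}" using len by auto
    thus ?thesis using finite_lists_length_eq[of "UNIV::'a set" n] finite_subset by auto
  qed
  have FCeq: "F ` C = C"
    using FC injF finC by (meson card_image card_subset_eq inj_on_subset subset_UNIV)
  show ?thesis
    unfolding reversible_DNA_def \<theta>_def[symmetric]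
  proof
    fix v assume v: "v \<in> dual_code n C"
    have lv: "length v = n" and orth: "\<forall>c\<in>C. (\<Sum>i<n. c ! i * v ! i) = 0"
      using v unfolding dual_code_def by auto
    have "\<forall>c\<in>C. (\<Sum>i<n. c ! i * rev (map \<theta> v) ! i) = 0"
    proof
      fix c assume c: "c \<in> C"
      then obtain d where d: "d \<in> C" and cd: "c = F d" using FCeq by blast
      have ld: "length d = n" using len d by blast
      have "(\<Sum>i<n. c ! i * rev (map \<theta> v) ! i)
          = (\<Sum>i<n. \<theta> (d ! (n - Suc i)) * \<theta> (v ! (n - Suc i)))"
        using ld lv by (auto simp: cd F_def rev_nth intro!: sum.cong)
      also have "\<dots> = (\<Sum>i<n. \<theta> (d ! i) * \<theta> (v ! i))"
        by (rule sum.reindex_bij_witness[of _ "\<lambda>i. n - Suc i" "\<lambda>i. n - Suc i"]) auto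
      also have "\<dots> = \<theta> (\<Sum>i<n. d ! i * v ! i)" by (simp add: sumt mul)
      also have "\<dots> = 0" using orth d zero by simp
      finally show "(\<Sum>i<n. c ! i * rev (map \<theta> v) ! i) = 0" .
    qed
    thus "rev (map \<theta> v) \<in> dual_code n C" unfolding dual_code_def using lv by simp
  qed
qed

end
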